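(* Let $G=(N,E)$ be a finite simple undirected graph with at least one edge, and consider the coordination game on $G$ in which every player has strategy set $\{1,2\}$. With the solution set being the set $\mathrm{NE}$ of pure Nash equilibria, $$\mathrm{PoSTA}\ge \frac12-\frac{|N|}{2|E|}\qquad\text{and}\qquad \mathrm{PoA}\ge\frac12,$$ and both bounds are tight (there are graphs for which they hold with equality).
   Context: The coordination game on $G=(N,E)$: players are the nodes, each player $i$ chooses a colour $s_i\in\{1,2\}$, and $u_i(s)=|\{j\in\mathrm{Neighb}(i): s_j=s_i\}|$, where $\mathrm{Neighb}(i)$ is the set of neighbours of $i$. $\mathrm{sw}(s)=\sum_i u_i(s)$. For a solution set $D$: a transition is a profile $t$ such that each $t_i$ equals $d_i$ for some $d\in D$. $\mathrm{BR}_i(s_{-i})$ is the set of best responses of $i$. A stable transition is a transition $s$ such that for every $i$ with $s_i\notin\mathrm{BR}_i(s_{-i})$ there is $j\neq i$ with $s_j\notin\mathrm{BR}_j(s_{-j})$ and some $\hat s_j\in\mathrm{BR}_j(s_{-j})$ with $s_i\in\mathrm{BR}_i(\hat s_j,s_{-\{i,j\}})$; $ST(D)$ is the set of stable transitions. $\mathrm{PoSTA}=\min_{s\in ST(\mathrm{NE})}\mathrm{sw}(s)/\max_{s}\mathrm{sw}(s)$ and $\mathrm{PoA}=\min_{s\in\mathrm{NE}}\mathrm{sw}(s)/\max_s\mathrm{sw}(s)$. *)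

theory Defs
  imports Complex_Main "HOL-Library.FuncSet"
begin

definition simple_graph :: "'a set \<Rightarrow> 'a set set \<Rightarrow> bool" where
  "simple_graph N E \<longleftrightarrow> finite N \<and> (\<forall>e\<in>E. e \<subseteq> N \<and> card e = 2)"

definition Neighb :: "'a set set \<Rightarrow> 'a \<Rightarrow> 'a set" where
  "Neighb E i = {j. {i, j} \<in> E}"

definition profiles :: "'a set \<Rightarrow> ('a \<Rightarrow> nat) set" where
  "profiles N = PiE N (\<lambda>_. {1, 2})"

definition util :: "'a set set \<Rightarrow> ('a \<Rightarrow> nat) \<Rightarrow> 'a \<Rightarrow> nat" where
  "util E s i = card {j \<in> Neighb E i. s j = s i}"

definition sw :: "'a set \<Rightarrow> 'a set set \<Rightarrow> ('a \<Rightarrow> nat) \<Rightarrow> nat" where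
  "sw N E s = (\<Sum>i\<in>N. util E s i)"

text \<open>Best responses of player i to s_{-i} (the component s i is ignored).\<close>
definition BR :: "'a set set \<Rightarrow> 'a \<Rightarrow> ('a \<Rightarrow> nat) \<Rightarrow> nat set" where
  "BR E i s = {c \<in> {1, 2}. \<forall>c' \<in> {1, 2}. util E (s(i := c')) i \<le> util E (s(i := c)) i}"

definition NE :: "'a set \<Rightarrow> 'a set set \<Rightarrow> ('a \<Rightarrow> nat) set" where
  "NE N E = {s \<in> profiles N. \<forall>i\<in>N. s i \<in> BR E i s}"

definition transitions :: "'a set \<Rightarrow> ('a \<Rightarrow> nat) set \<Rightarrow> ('a \<Rightarrow> nat) set" where
  "transitions N D = {t \<in> profiles N. \<forall>i\<in>N. \<exists>d\<in>D. t i = d i}"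

definition ST :: "'a set \<Rightarrow> 'a set set \<Rightarrow> ('a \<Rightarrow> nat) set \<Rightarrow> ('a \<Rightarrow> nat) set" where
  "ST N E D = {s \<in> transitions N D. \<forall>i\<in>N. s i \<notin> BR E i s \<longrightarrow>
      (\<exists>j\<in>N. j \<noteq> i \<and> s j \<notin> BR E j s \<and>
         (\<exists>sh \<in> BR E j s. s i \<in> BR E i (s(j := sh))))}"

definition PoSTA :: "'a set \<Rightarrow> 'a set set \<Rightarrow> real" where
  "PoSTA N E = real (Min (sw N E ` ST N E (NE N E))) / real (Max (sw N E ` profiles N))"

definition PoA :: "'a set \<Rightarrow> 'a set set \<Rightarrow> real" where
  "PoA N E = real (Min (sw N E ` NE N E)) / real (Max (sw N E ` profiles N))"

end

theory Submission
  imports Defs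
begin

lemma sg_finE: "simple_graph N E \<Longrightarrow> finite E"
proof -
  assume a: "simple_graph N E"
  then have "E \<subseteq> Pow N" unfolding simple_graph_def by auto
  moreover have "finite (Pow N)" using a unfolding simple_graph_def by simp
  ultimately show "finite E" by (rule finite_subset)
qed

lemma nb_sub: "simple_graph N E \<Longrightarrow> Neighb E i \<subseteq> N"
  unfolding simple_graph_def Neighb_def by auto

lemma nb_fin: "simple_graph N E \<Longrightarrow> finite (Neighb E i)"
  using nb_sub[of N E i] unfolding simple_graph_def by (blast intro: finite_subset)

lemma nb_neq: "simple_graph N E \<Longrightarrow> j \<in> Neighb E i \<Longrightarrow> j \<noteq> i"
  unfolding simple_graph_def Neighb_def by fastforce

lemma nb_card: assumes "simple_graph N E"
  shows "card (Neighb E i) = card {e\<in>E. i \<in> e}"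
proof -
  have "inj_on (\<lambda>j. {i,j}) (Neighb E i)" by (auto simp: inj_on_def doubleton_eq_iff)
  moreover have "(\<lambda>j. {i,j}) ` Neighb E i = {e\<in>E. i \<in> e}"
  proof
    show "(\<lambda>j. {i,j}) ` Neighb E i \<subseteq> {e\<in>E. i \<in> e}" by (auto simp: Neighb_def)
    show "{e\<in>E. i \<in> e} \<subseteq> (\<lambda>j. {i,j}) ` Neighb E i"
    proof
      fix e assume e: "e \<in> {e\<in>E. i \<in> e}"
      then have "card e = 2" using assms by (auto simp: simple_graph_def)
      then obtain x y where xy: "e = {x,y}" "x \<noteq> y" by (auto simp: card_2_iff)
      show "e \<in> (\<lambda>j. {i,j}) ` Neighb E i"
      proof (cases "i = x")
        case True then show ?thesis using e xy by (auto simp: Neighb_def image_def)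
      next
        case False then have "i = y" using e xy by auto
        then show ?thesis using e xy by (auto simp: Neighb_def image_def insert_commute)
      qed
    qed
  qed
  ultimately show ?thesis by (metis card_image)
qed

lemma handshake: assumes "simple_graph N E"
  shows "(\<Sum>i\<in>N. card (Neighb E i)) = 2 * card E"
proof -
  have fN: "finite N" and fE: "finite E" using assms sg_finE by (auto simp: simple_graph_def)
  have "(\<Sum>i\<in>N. card (Neighb E i)) = (\<Sum>i\<in>N. \<Sum>e\<in>E. if i \<in> e then 1 else 0)"
    using nb_card[OF assms] fE by (simp add: sum.If_cases Int_def)
  also have "\<dots> = (\<Sum>e\<in>E. \<Sum>i\<in>N. if i \<in> e then 1 else 0)" by (rule sum.swap)
  also have "\<dots> = (\<Sum>e\<in>E. card e)"
  proof (rule sum.cong[OF refl])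
    fix e assume "e \<in> E"
    then have "e \<subseteq> N" using assms by (auto simp: simple_graph_def)
    then have "N \<inter> e = e" by auto
    then show "(\<Sum>i\<in>N. if i \<in> e then 1 else 0) = card e" using fN by (simp add: sum.If_cases)
  qed
  also have "\<dots> = (\<Sum>e\<in>E. 2)" using assms by (auto simp: simple_graph_def)
  finally show ?thesis by simp
qed

lemma util_le: "simple_graph N E \<Longrightarrow> util E s i \<le> card (Neighb E i)"
  unfolding util_def by (rule card_mono[OF nb_fin]) auto

lemma util_upd: assumes "simple_graph N E" "j \<noteq> i"
  shows "util E (t(j:=x)) i \<le> util E t i + 1"
proof -
  have "{k \<in> Neighb E i. (t(j:=x)) k = (t(j:=x)) i} \<subseteq> insert j {k \<in> Neighb E i. t k = t i}"
    using assms by auto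
  moreover have "finite {k \<in> Neighb E i. t k = t i}" using nb_fin[OF assms(1)] by auto
  ultimately have "card {k \<in> Neighb E i. (t(j:=x)) k = (t(j:=x)) i} \<le> card (insert j {k \<in> Neighb E i. t k = t i})"
    by (intro card_mono) auto
  moreover have "card (insert j {k \<in> Neighb E i. t k = t i}) \<le> card {k \<in> Neighb E i. t k = t i} + 1"
    using \<open>finite {k \<in> Neighb E i. t k = t i}\<close> by (simp add: card_insert_if)
  ultimately show ?thesis unfolding util_def by linarith
qed

lemma util_sum: assumes "simple_graph N E" "s \<in> profiles N" "i \<in> N"
  shows "util E s i + util E (s(i := 3 - s i)) i = card (Neighb E i)"
proof -
  let ?A = "{j \<in> Neighb E i. s j = s i}" and ?B = "{j \<in> Neighb E i. s j = 3 - s i}"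
  have si: "s i \<in> {1,2}" using assms unfolding profiles_def by (meson PiE_mem)
  have "{j \<in> Neighb E i. (s(i := 3 - s i)) j = (s(i := 3 - s i)) i} = ?B"
    using nb_neq[OF assms(1)] by auto
  moreover have "?A \<union> ?B = Neighb E i"
  proof
    show "?A \<union> ?B \<subseteq> Neighb E i" by auto
    show "Neighb E i \<subseteq> ?A \<union> ?B"
    proof
      fix j assume j: "j \<in> Neighb E i"
      then have "j \<in> N" using nb_sub[OF assms(1)] by auto
      then have "s j \<in> {1,2}" using assms(2) unfolding profiles_def by (meson PiE_mem)
      then show "j \<in> ?A \<union> ?B" using si j by auto
    qed
  qed
  moreover have "?A \<inter> ?B = {}" using si by auto
  moreover have "finite ?A" "finite ?B" using nb_fin[OF assms(1)] by auto
  ultimately have "card ?A + card ?B = card (Neighb E i)"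
    using card_Un_disjoint[of ?A ?B] by simp
  then show ?thesis unfolding util_def using \<open>{j \<in> Neighb E i. (s(i := 3 - s i)) j = (s(i := 3 - s i)) i} = ?B\<close> by simp
qed

lemma other_col: assumes "s \<in> profiles N" "i \<in> N" shows "3 - s i \<in> {1,2::nat}"
proof -
  have "s i \<in> {1,2}" using assms unfolding profiles_def by (meson PiE_mem)
  then show ?thesis by auto
qed

lemma BR_D: assumes "c \<in> BR E i t" "c' \<in> {1,2}"
  shows "util E (t(i := c')) i \<le> util E (t(i := c)) i"
proof -
  have "\<forall>c'\<in>{1,2}. util E (t(i:=c')) i \<le> util E (t(i:=c)) i"
    using assms(1) unfolding BR_def by blast
  then show ?thesis using assms(2) by (rule bspec)
qed

lemma key_BR: assumes "simple_graph N E" "s \<in> profiles N" "i \<in> N" "s i \<in> BR E i s"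
  shows "card (Neighb E i) \<le> 2 * util E s i"
proof -
  have "util E (s(i := 3 - s i)) i \<le> util E (s(i := s i)) i"
    using BR_D[OF assms(4) other_col[OF assms(2,3)]] .
  then show ?thesis using util_sum[OF assms(1-3)] by simp
qed

lemma key_ST: assumes "simple_graph N E" "s \<in> ST N E D" "i \<in> N"
  shows "card (Neighb E i) \<le> 2 * util E s i + 2"
proof -
  have sp: "s \<in> profiles N" using assms(2) unfolding ST_def transitions_def by auto
  show ?thesis
  proof (cases "s i \<in> BR E i s")
    case True then show ?thesis using key_BR[OF assms(1) sp assms(3)] by simp
  next
    case False
    then obtain j sh where j: "j \<noteq> i" "s i \<in> BR E i (s(j := sh))"
      using assms(2,3) unfolding ST_def by blast
    let ?t = "s(j := sh)"
    have "util E (?t(i := 3 - s i)) i \<le> util E (?t(i := s i)) i"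
      using BR_D[OF j(2) other_col[OF sp assms(3)]] .
    moreover have "?t(i := s i) = ?t" using j(1) by auto
    ultimately have a: "util E (?t(i := 3 - s i)) i \<le> util E ?t i" by simp
    moreover have "util E ?t i \<le> util E s i + 1" using util_upd[OF assms(1) j(1)] by blast
    moreover have "util E (s(i := 3 - s i)) i \<le> util E (?t(i := 3 - s i)) i + 1"
    proof -
      have "s(i := 3 - s i) = (?t(i := 3 - s i))(j := s j)" using j(1) by auto
      then show ?thesis using util_upd[OF assms(1) j(1), of "?t(i := 3 - s i)" "s j"] by simp
    qed
    ultimately show ?thesis using util_sum[OF assms(1) sp assms(3)] by linarith
  qed
qed


definition constp :: "'a set \<Rightarrow> nat \<Rightarrow> 'a \<Rightarrow> nat" where
  "constp N c = restrict (\<lambda>_. c) N"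

lemma constp_prof: "c \<in> {1,2} \<Longrightarrow> constp N c \<in> profiles N"
  unfolding constp_def profiles_def by auto

lemma constp_util: assumes "simple_graph N E" "i \<in> N"
  shows "util E (constp N c) i = card (Neighb E i)"
proof -
  have "{j \<in> Neighb E i. constp N c j = constp N c i} = Neighb E i"
    using nb_sub[OF assms(1)] assms(2) unfolding constp_def by auto
  then show ?thesis unfolding util_def by simp
qed

lemma constp_NE: assumes "simple_graph N E" "c \<in> {1,2}"
  shows "constp N c \<in> NE N E"
  unfolding NE_def
proof (intro CollectI conjI ballI)
  show "constp N c \<in> profiles N" using constp_prof[OF assms(2)] .
  fix i assume i: "i \<in> N"
  have ci: "constp N c i = c" using i unfolding constp_def by simp
  have "(constp N c)(i := c) = constp N c" using ci by auto
  then show "constp N c i \<in> BR E i (constp N c)"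
    unfolding BR_def using ci assms(2) util_le[OF assms(1)] constp_util[OF assms(1) i] by auto
qed

lemma NE_ST: assumes "s \<in> NE N E" shows "s \<in> ST N E (NE N E)"
  using assms unfolding ST_def transitions_def NE_def by auto

lemma fin_prof: "finite N \<Longrightarrow> finite (profiles N)"
  unfolding profiles_def by (simp add: finite_PiE)

lemma Max_sw: assumes "simple_graph N E"
  shows "Max (sw N E ` profiles N) = 2 * card E"
proof (rule Max_eqI)
  show "finite (sw N E ` profiles N)" using assms fin_prof by (auto simp: simple_graph_def)
  fix y assume "y \<in> sw N E ` profiles N"
  then obtain s where "y = sw N E s" by auto
  then have "y \<le> (\<Sum>i\<in>N. card (Neighb E i))"
    unfolding sw_def by (simp add: sum_mono util_le[OF assms])
  then show "y \<le> 2 * card E" using handshake[OF assms] by simp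
next
  have "sw N E (constp N 1) = 2 * card E"
    unfolding sw_def using constp_util[OF assms] handshake[OF assms] by simp
  then show "2 * card E \<in> sw N E ` profiles N" using constp_prof[of 1 N] by force
qed

lemma ST_lower: assumes "simple_graph N E" "s \<in> ST N E D"
  shows "2 * card E \<le> 2 * sw N E s + 2 * card N"
proof -
  have "(\<Sum>i\<in>N. card (Neighb E i)) \<le> (\<Sum>i\<in>N. 2 * util E s i + 2)"
    by (rule sum_mono) (rule key_ST[OF assms])
  also have "\<dots> = (\<Sum>i\<in>N. 2 * util E s i) + (\<Sum>i\<in>N. 2)" by (rule sum.distrib)
  also have "\<dots> = 2 * sw N E s + 2 * card N" unfolding sw_def by (simp add: sum_distrib_left)
  finally show ?thesis using handshake[OF assms(1)] by simp
qed

lemma NE_lower: assumes "simple_graph N E" "s \<in> NE N E"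
  shows "card E \<le> sw N E s"
proof -
  have "(\<Sum>i\<in>N. card (Neighb E i)) \<le> (\<Sum>i\<in>N. 2 * util E s i)"
    by (rule sum_mono) (use assms in \<open>auto intro: key_BR simp: NE_def\<close>)
  also have "\<dots> = 2 * sw N E s" unfolding sw_def by (simp add: sum_distrib_left)
  finally show ?thesis using handshake[OF assms(1)] by simp
qed

lemma main_bounds: assumes "simple_graph N E" "E \<noteq> {}"
  shows "PoSTA N E \<ge> 1/2 - real (card N) / (2 * real (card E))" "PoA N E \<ge> 1/2"
proof -
  have fN: "finite N" using assms by (simp add: simple_graph_def)
  have cE: "card E > 0" using assms sg_finE card_gt_0_iff by blast
  have M: "real (Max (sw N E ` profiles N)) = 2 * real (card E)" using Max_sw[OF assms(1)] by simp
  have fST: "finite (sw N E ` ST N E (NE N E))"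
    using fin_prof[OF fN] unfolding ST_def transitions_def by auto
  have neST: "sw N E ` ST N E (NE N E) \<noteq> {}" using NE_ST constp_NE[OF assms(1), of 1] by blast
  obtain s where s: "s \<in> ST N E (NE N E)" "Min (sw N E ` ST N E (NE N E)) = sw N E s"
    using Min_in[OF fST neST] by auto
  have "real (card E) - real (card N) \<le> real (sw N E s)" using ST_lower[OF assms(1) s(1)] by linarith
  then have "(real (card E) - real (card N)) / (2 * real (card E)) \<le> real (sw N E s) / (2 * real (card E))"
    using cE by (intro divide_right_mono) auto
  moreover have "(real (card E) - real (card N)) / (2 * real (card E)) = 1/2 - real (card N) / (2 * real (card E))"
    using cE by (simp add: field_simps)
  ultimately show "PoSTA N E \<ge> 1/2 - real (card N) / (2 * real (card E))"
    unfolding PoSTA_def M s(2) by simp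
  have fNE: "finite (sw N E ` NE N E)"
    using fin_prof[OF fN] unfolding NE_def by auto
  have neNE: "sw N E ` NE N E \<noteq> {}" using constp_NE[OF assms(1), of 1] by blast
  obtain t where t: "t \<in> NE N E" "Min (sw N E ` NE N E) = sw N E t"
    using Min_in[OF fNE neNE] by auto
  have "real (card E) \<le> real (sw N E t)" using NE_lower[OF assms(1) t(1)] by simp
  then have "real (card E) / (2 * real (card E)) \<le> real (sw N E t) / (2 * real (card E))"
    using cE by (intro divide_right_mono) auto
  then show "PoA N E \<ge> 1/2" unfolding PoA_def M t(2) using cE by simp
qed


definition N4 :: "nat set" where "N4 = {0,1,2,3}"
definition E4 :: "nat set set" where "E4 = {{0,1},{1,2},{2,3},{3,0}}"

lemma sg4: "simple_graph N4 E4"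
  unfolding simple_graph_def N4_def E4_def by auto

lemma cardE4: "card E4 = 4"
  unfolding E4_def by (simp add: doubleton_eq_iff)

lemma cardN4: "card N4 = 4"
  unfolding N4_def by simp

lemma nb4: "Neighb E4 i = (if i = 0 then {1,3} else if i = 1 then {0,2} else if i = 2 then {1,3}
   else if i = 3 then {0,2} else {})"
  unfolding Neighb_def E4_def by (auto simp: doubleton_eq_iff)

lemma util4: "util E4 s i = (\<Sum>j\<in>Neighb E4 i. if s j = s i then 1 else 0)"
proof -
  have "finite (Neighb E4 i)" by (rule nb_fin[OF sg4])
  then show ?thesis unfolding util_def by (simp add: sum.If_cases Int_def)
qed

definition alt4 :: "nat \<Rightarrow> nat" where "alt4 = restrict (\<lambda>i. if i = 0 \<or> i = 2 then 1 else 2) N4"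
definition blk4 :: "nat \<Rightarrow> nat" where "blk4 = restrict (\<lambda>i. if i = 0 \<or> i = 1 then 1 else 2) N4"

lemma alt4_prof: "alt4 \<in> profiles N4"
  unfolding alt4_def profiles_def by auto

lemma blk4_prof: "blk4 \<in> profiles N4"
  unfolding blk4_def profiles_def by auto

lemma sw_alt4: "sw N4 E4 alt4 = 0"
  unfolding sw_def N4_def by (simp add: util4 nb4 alt4_def N4_def)

lemma sw_blk4: "sw N4 E4 blk4 = 4"
  unfolding sw_def N4_def by (simp add: util4 nb4 blk4_def N4_def)

lemma blk4_NE: "blk4 \<in> NE N4 E4"
  unfolding NE_def using blk4_prof
  by (simp add: BR_def util4 nb4 blk4_def N4_def)

lemma alt4_ST: "alt4 \<in> ST N4 E4 (NE N4 E4)"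
proof -
  have c1: "constp N4 1 \<in> NE N4 E4" and c2: "constp N4 2 \<in> NE N4 E4"
    using constp_NE[OF sg4] by auto
  have "alt4 \<in> transitions N4 (NE N4 E4)"
    unfolding transitions_def using alt4_prof
  proof (intro CollectI conjI ballI)
    fix i assume "i \<in> N4"
    show "\<exists>d\<in>NE N4 E4. alt4 i = d i"
    proof (cases "alt4 i = 1")
      case True then show ?thesis using c1 \<open>i \<in> N4\<close> by (intro bexI[of _ "constp N4 1"]) (auto simp: constp_def)
    next
      case False
      then have "alt4 i = 2" using \<open>i \<in> N4\<close> by (auto simp: alt4_def split: if_splits)
      then show ?thesis using c2 \<open>i \<in> N4\<close> by (intro bexI[of _ "constp N4 2"]) (auto simp: constp_def)
    qed
  qed (use alt4_prof in simp)
  moreover have "\<forall>i\<in>N4. alt4 i \<notin> BR E4 i alt4 \<longrightarrow>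
      (\<exists>j\<in>N4. j \<noteq> i \<and> alt4 j \<notin> BR E4 j alt4 \<and>
         (\<exists>sh \<in> BR E4 j alt4. alt4 i \<in> BR E4 i (alt4(j := sh))))"
    unfolding N4_def
    by (simp add: BR_def util4 nb4 alt4_def N4_def)
  ultimately show ?thesis unfolding ST_def by blast
qed


theorem theorem4:
  fixes N :: "'a set" and E :: "'a set set"
  assumes "simple_graph N E" and "E \<noteq> {}"
  shows "PoSTA N E \<ge> 1/2 - real (card N) / (2 * real (card E))
       \<and> PoA N E \<ge> 1/2
       \<and> (\<exists>(N' :: nat set) E'. simple_graph N' E' \<and> E' \<noteq> {} \<and>
             PoSTA N' E' = 1/2 - real (card N') / (2 * real (card E')))
       \<and> (\<exists>(N' :: nat set) E'. simple_graph N' E' \<and> E' \<noteq> {} \<and> PoA N' E' = 1/2)"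
proof -
  have ne4: "E4 \<noteq> {}" unfolding E4_def by simp
  have fN4: "finite N4" unfolding N4_def by simp
  have M4: "real (Max (sw N4 E4 ` profiles N4)) = 8" using Max_sw[OF sg4] cardE4 by simp
  have "Min (sw N4 E4 ` ST N4 E4 (NE N4 E4)) \<le> sw N4 E4 alt4"
    using fin_prof[OF fN4] alt4_ST unfolding ST_def transitions_def by (intro Min_le) auto
  then have "Min (sw N4 E4 ` ST N4 E4 (NE N4 E4)) = 0" using sw_alt4 by simp
  then have "PoSTA N4 E4 = 0" unfolding PoSTA_def by simp
  moreover have "1/2 - real (card N4) / (2 * real (card E4)) = (0::real)" using cardE4 cardN4 by simp
  ultimately have P1: "PoSTA N4 E4 = 1/2 - real (card N4) / (2 * real (card E4))" by simp
  have "Min (sw N4 E4 ` NE N4 E4) \<le> sw N4 E4 blk4"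
    using fin_prof[OF fN4] blk4_NE unfolding NE_def by (intro Min_le) auto
  then have "real (Min (sw N4 E4 ` NE N4 E4)) \<le> 4" using sw_blk4 by simp
  then have "PoA N4 E4 \<le> 1/2" unfolding PoA_def M4 by simp
  then have P2: "PoA N4 E4 = 1/2" using main_bounds(2)[OF sg4 ne4] by simp
  show ?thesis using main_bounds[OF assms] P1 P2 sg4 ne4 by blast
qed

end
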